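(* Let $\lambda$ be a positive integer, let $\rho>1$, and let $f$ be analytic inside and on the Bernstein ellipse $\mathcal{E}_\rho$. Then for each $n\ge0$, \[ a_n^{\lambda}=\frac{c_{n,\lambda}}{i\pi}\sum_{k=0}^{\lambda-1}\frac{(n+1)_k(1-\lambda)_k}{(n+\lambda+1)_k\,k!}\oint_{\mathcal{E}_\rho}\frac{f(z)}{(z\pm\sqrt{z^2-1})^{n+2k+1}}\,dz, \] where the sign is chosen so that $|z\pm\sqrt{z^2-1}|>1$, the contour is traversed counterclockwise, and $c_{n,\lambda}=\Gamma(\lambda)\Gamma(n+1)/\Gamma(n+\lambda)$.
   Context: $C_n^{(\lambda)}$ denotes the Gegenbauer polynomial of degree $n$ normalized by $C_n^{(\lambda)}(1)=\Gamma(n+2\lambda)/(n!\,\Gamma(2\lambda))$, orthogonal on $[-1,1]$ with weight $(1-x^2)^{\lambda-1/2}$, with $h_n^{(\lambda)}=\int_{-1}^1(1-x^2)^{\lambda-1/2}(C_n^{(\lambda)})^2dx=\frac{2^{1-2\lambda}\pi}{\Gamma(\lambda)^2}\frac{\Gamma(n+2\lambda)}{\Gamma(n+1)(n+\lambda)}$. The Gegenbauer coefficients of $f$ are $a_n^{\lambda}=\frac{1}{h_n^{(\lambda)}}\int_{-1}^1(1-x^2)^{\lambda-1/2}f(x)C_n^{(\lambda)}(x)\,dx$. $\mathcal{E}_\rho=\{\tfrac12(\rho e^{i\theta}+\rho^{-1}e^{-i\theta}):0\le\theta\le2\pi\}$. $(z)_k$ is the Pochhammer symbol. *)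

theory Defs
  imports "HOL-Complex_Analysis.Complex_Analysis"
begin

text \<open>Gegenbauer polynomial C_n^(lam)(x), standard normalisation
  C_n^(lam)(x) = sum_{k=0}^{floor(n/2)} (-1)^k (lam)_{n-k} / (k! (n-2k)!) (2x)^{n-2k},
  so that C_n^(lam)(1) = Gamma(n+2 lam)/(n! Gamma(2 lam)).\<close>
definition gegenbauer :: "nat \<Rightarrow> real \<Rightarrow> real \<Rightarrow> real" where
  "gegenbauer n lam x =
     (\<Sum>k\<le>n div 2. (-1)^k * pochhammer lam (n - k) / (fact k * fact (n - 2*k)) * (2*x)^(n - 2*k))"

definition gegenbauer_weight :: "real \<Rightarrow> real \<Rightarrow> real" where
  "gegenbauer_weight lam x = (1 - x^2) powr (lam - 1/2)"

definition gegenbauer_h :: "nat \<Rightarrow> real \<Rightarrow> real" where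
  "gegenbauer_h n lam = integral {-1..1} (\<lambda>x. gegenbauer_weight lam x * (gegenbauer n lam x)^2)"

definition gegenbauer_coeff :: "nat \<Rightarrow> real \<Rightarrow> (complex \<Rightarrow> complex) \<Rightarrow> complex" where
  "gegenbauer_coeff n lam f =
     integral {-1..1} (\<lambda>x. complex_of_real (gegenbauer_weight lam x * gegenbauer n lam x) * f (complex_of_real x))
     / complex_of_real (gegenbauer_h n lam)"

definition bernstein_ellipse :: "real \<Rightarrow> real \<Rightarrow> complex" where
  "bernstein_ellipse rho t =
     (complex_of_real rho * cis (2*pi*t) + complex_of_real (inverse rho) * cis (-(2*pi*t))) / 2"

text \<open>Closed region bounded by E_rho (foci +-1, major semi-axis (rho+1/rho)/2).\<close>
definition bernstein_region :: "real \<Rightarrow> complex set" where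
  "bernstein_region rho = {z. cmod (z - 1) + cmod (z + 1) \<le> rho + inverse rho}"

definition joukowski_inv :: "complex \<Rightarrow> complex" where
  "joukowski_inv z = (if cmod (z + csqrt (z^2 - 1)) > 1 then z + csqrt (z^2 - 1)
                      else z - csqrt (z^2 - 1))"

end

theory Submission
  imports Defs
begin

definition gb :: "real \<Rightarrow> nat \<Rightarrow> nat \<Rightarrow> real" where
  "gb L n k = (if 2*k \<le> n then (-1)^k * pochhammer L (n - k) / (fact k * fact (n - 2*k)) else 0)"

lemma geg_alt: "gegenbauer n L x = (\<Sum>k\<le>n. gb L n k * (2*x)^(n - 2*k))"
  unfolding gegenbauer_def gb_def
  by (rule sum.mono_neutral_cong_left) auto

lemma gb_rec:
  fixes L :: real
  assumes "n \<ge> 1"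
  shows "real (n+1) * gb L (n+1) k = (real n + L) * gb L n k
          - (real n + 2*L - 1) * (if k = 0 then 0 else gb L (n-1) (k-1))"
proof (cases "2*k \<le> n+1")
  case False
  then show ?thesis using assms by (auto simp: gb_def)
next
  case True
  show ?thesis
  proof (cases k)
    case 0
    have f: "fact n > (0::real)" by simp
    have g: "gb L (n+1) k = pochhammer L n * (L + real n) / (real (n+1) * fact n)"
      using 0 by (simp add: gb_def pochhammer_Suc fact_Suc)
    have "real (n+1) * gb L (n+1) k = pochhammer L n * (L + real n) / fact n"
      unfolding g using f by (simp del: of_nat_Suc)
    then show ?thesis using 0 by (simp add: gb_def field_simps)
  next
    case (Suc j)
    show ?thesis
    proof (cases "2*k = n+1")
      case True
      then have n: "n = 2*j + 1" using Suc by simp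
      have a: "gb L (n+1) k = (-1)^(j+1) * (pochhammer L j * (L + real j)) / (real (j+1) * fact j)"
        using Suc n by (simp add: gb_def pochhammer_Suc fact_Suc)
      have b: "gb L n k = 0" using Suc n by (simp add: gb_def)
      have c: "gb L (n-1) (k-1) = (-1)^j * pochhammer L j / fact j"
        using Suc n by (simp add: gb_def)
      have d: "real (n+1) = 2 * real (j+1)" "real n = 2 * real j + 1" using n by auto
      have f: "fact j > (0::real)" by simp
      have e: "real (j+1) \<noteq> 0" by simp
      have alg: "- (2 * ((- 1) ^ j * (pochhammer L j * (L + real j))) / fact j) =
          (- (2 * L) - 2 * real j) * ((- 1) ^ j * pochhammer L j) / (fact j::real)"
        by (simp add: divide_simps algebra_simps)
      have "real (n+1) * gb L (n+1) k = - (2 * (L + real j)) * ((-1)^j * pochhammer L j / fact j)"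
        unfolding a d using e by (simp add: power_Suc alg del: of_nat_Suc)
      also have "\<dots> = (real n + L) * gb L n k
          - (real n + 2*L - 1) * (if k = 0 then 0 else gb L (n-1) (k-1))"
        unfolding b c d using Suc by (simp add: algebra_simps)
      finally show ?thesis .
    next
      case False
      with \<open>2*k \<le> n+1\<close> obtain r where n: "n = r + 2*k"
      proof -
        have "2*k \<le> n" using \<open>2*k \<le> n+1\<close> False by simp
        then have "n = (n - 2*k) + 2*k" by simp
        then show ?thesis using that by blast
      qed
      define Y where "Y = (-1)^j * pochhammer L (r+j+1) / (fact j * fact r)"
      have k: "k = j + 1" using Suc by simp
      have a: "gb L (n+1) k = - Y * (L + real r + real j + 1) / ((real j + 1) * (real r + 1))"
      proof -
        have "n + 1 - k = Suc (r + j + 1)" "n+1-2*k = Suc r" using n k by auto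
        then show ?thesis using n k unfolding Y_def gb_def
          by (simp add: pochhammer_Suc fact_Suc) (simp add: field_simps)
      qed
      have b: "gb L n k = - Y / (real j + 1)"
      proof -
        have "n - k = r + j + 1" "n - 2*k = r" using n k by auto
        then show ?thesis using n k unfolding Y_def gb_def
          by (simp add: fact_Suc) (simp add: field_simps)
      qed
      have c: "gb L (n-1) (k-1) = Y / (real r + 1)"
      proof -
        have "n - 1 - j = r + j + 1" "n - 1 - 2*j = Suc r" using n k by auto
        then show ?thesis using n k unfolding Y_def gb_def
          by (simp add: fact_Suc) (simp add: field_simps)
      qed
      have d: "real n = real r + 2 * real j + 2" using n k by simp
      have p1: "real j + 1 \<noteq> 0" "real r + 1 \<noteq> 0" by (simp_all add: add_nonneg_eq_0_iff)
      show ?thesis unfolding a b c using k p1 d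
        by (simp add: field_simps)
    qed
  qed
qed
lemma geg_rec:
  assumes "n \<ge> 1"
  shows "real (n+1) * gegenbauer (n+1) L x
     = 2 * (real n + L) * x * gegenbauer n L x - (real n + 2*L - 1) * gegenbauer (n-1) L x"
proof -
  define y where "y = 2*x"
  obtain m where m: "n = Suc m" using assms by (cases n) auto
  have A: "gegenbauer (n+1) L x = (\<Sum>k\<le>n+1. gb L (n+1) k * y^(n+1-2*k))"
    unfolding geg_alt y_def ..
  have B: "y * gegenbauer n L x = (\<Sum>k\<le>n+1. gb L n k * y^(n+1-2*k))"
  proof -
    have "y * gegenbauer n L x = (\<Sum>k\<le>n. gb L n k * y^(n+1-2*k))"
      unfolding geg_alt y_def[symmetric] sum_distrib_left
    proof (rule sum.cong[OF refl])
      fix k assume "k \<in> {..n}"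
      show "y * (gb L n k * y ^ (n - 2 * k)) = gb L n k * y ^ (n + 1 - 2 * k)"
      proof (cases "2*k \<le> n")
        case True
        then have "n + 1 - 2*k = Suc (n - 2*k)" by simp
        then show ?thesis by simp
      qed (simp add: gb_def)
    qed
    also have "\<dots> = (\<Sum>k\<le>n+1. gb L n k * y^(n+1-2*k))"
      by (simp add: gb_def)
    finally show ?thesis .
  qed
  have C: "gegenbauer (n-1) L x = (\<Sum>k\<le>n+1. (if k = 0 then 0 else gb L (n-1) (k-1)) * y^(n+1-2*k))"
  proof -
    have "(\<Sum>k\<le>n+1. (if k = 0 then 0 else gb L (n-1) (k-1)) * y^(n+1-2*k))
        = (\<Sum>k\<le>Suc m. gb L m k * y^(m - 2*k))"
    proof -
      let ?H = "\<lambda>k. (if k = 0 then 0 else gb L (n-1) (k-1)) * y^(n+1-2*k)"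
      have "(\<Sum>k\<le>Suc n. ?H k) = ?H 0 + (\<Sum>k\<le>n. ?H (Suc k))"
        by (rule sum.atMost_Suc_shift)
      moreover have "?H (Suc k) = gb L m k * y^(m - 2*k)" for k using m by simp
      ultimately show ?thesis using m by simp
    qed
    also have "\<dots> = (\<Sum>k\<le>m. gb L m k * y^(m - 2*k))"
      by (simp add: gb_def)
    finally show ?thesis unfolding geg_alt y_def m by simp
  qed
  have "real (n+1) * gegenbauer (n+1) L x
      = (\<Sum>k\<le>n+1. ((real n + L) * gb L n k
          - (real n + 2*L - 1) * (if k = 0 then 0 else gb L (n-1) (k-1))) * y^(n+1-2*k))"
    unfolding A sum_distrib_left
    by (rule sum.cong[OF refl]) (simp add: gb_rec[OF assms, symmetric])
  also have "\<dots> = (real n + L) * (y * gegenbauer n L x) - (real n + 2*L - 1) * gegenbauer (n-1) L x"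
    unfolding B C sum_distrib_left sum_subtractf[symmetric] by (rule sum.cong[OF refl]) (simp add: algebra_simps)
  finally show ?thesis by (simp add: y_def algebra_simps)
qed

definition coef :: "real \<Rightarrow> real \<Rightarrow> nat \<Rightarrow> real" where
  "coef L x k = pochhammer (x + 1) k * pochhammer (1 - L) k / (pochhammer (x + L + 1) k * fact k)"

definition TT :: "nat \<Rightarrow> real \<Rightarrow> real \<Rightarrow> real" where
  "TT l x t = (\<Sum>k<l. coef (real l) x k * sin ((x + 2 * real k + 1) * t))"

lemma coef_0 [simp]: "coef L x 0 = 1" by (simp add: coef_def)

lemma coef_minus1: "coef L (-1) (Suc j) = 0"
  by (simp add: coef_def pochhammer_rec)

lemma coef_top: assumes "l > 0" shows "coef (real l) x l = 0"
proof -
  have "pochhammer (1 - real l) l = 0"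
    using assms by (auto simp: pochhammer_eq_0_iff intro!: exI[of _ "l - 1"])
  then show ?thesis by (simp add: coef_def)
qed

lemma ratQ:
  fixes x L j X :: real
  assumes "x + 1 > 0" "x + L + 1 > 0" "x + L + 1 + j > 0" "x + L > 0" "j + 1 > 0"
  shows "(x+1)*(x+2*L)/(x+L+1) * (X * ((x+1+j)*(x+L+1)/((x+1)*(x+L+1+j))))
       = (x+L) * (X + X * ((x+1+j)*(1-L+j)/((x+L+1+j)*(j+1))) - X * (x*(1-L+j)/((x+L)*(j+1))))"
proof -
  have ne: "x + 1 \<noteq> 0" "x + L + 1 \<noteq> 0" "x + L + 1 + j \<noteq> 0" "x + L \<noteq> 0" "j + 1 \<noteq> 0" using assms by auto
  show ?thesis using ne by (simp add: divide_simps) (simp add: algebra_simps)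
qed

lemma coefQ:
  assumes x: "x \<ge> 0" and L: "L \<ge> 1"
  shows "(x+1)*(x+2*L)/(x+L+1) * coef L (x+1) j
       = (x+L) * (coef L x j + coef L x (Suc j) - coef L (x-1) (Suc j))"
proof -
  define P where "P = pochhammer (x+1) j"
  define Q where "Q = pochhammer (x+L+1) j"
  define A where "A = pochhammer (1-L) j"
  define F where "F = (fact j :: real)"
  have Qpos: "Q > 0" unfolding Q_def using x L by (intro pochhammer_pos) simp
  have Fpos: "F > 0" unfolding F_def by simp
  have h1: "pochhammer (x+2) j = P * (x+1+j) / (x+1)"
  proof -
    have "pochhammer (x+1) (Suc j) = (x+1) * pochhammer (x+1+1) j" by (rule pochhammer_rec)
    moreover have "pochhammer (x+1) (Suc j) = P * (x+1+j)" unfolding P_def by (simp add: pochhammer_Suc)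
    ultimately show ?thesis using x by (simp add: field_simps)
  qed
  have h2: "pochhammer (x+L+2) j = Q * (x+L+1+j) / (x+L+1)"
  proof -
    have "pochhammer (x+L+1) (Suc j) = (x+L+1) * pochhammer (x+L+1+1) j" by (rule pochhammer_rec)
    moreover have "pochhammer (x+L+1) (Suc j) = Q * (x+L+1+j)" unfolding Q_def by (simp add: pochhammer_Suc)
    ultimately show ?thesis using x L by (simp add: field_simps)
  qed
  have h3: "pochhammer (x+1) (Suc j) = P * (x+1+j)" unfolding P_def by (simp add: pochhammer_Suc)
  have h4: "pochhammer (x+L+1) (Suc j) = Q * (x+L+1+j)" unfolding Q_def by (simp add: pochhammer_Suc)
  have h5: "pochhammer x (Suc j) = x * P" unfolding P_def by (simp add: pochhammer_rec)
  have h6: "pochhammer (x+L) (Suc j) = (x+L) * Q" unfolding Q_def by (simp add: pochhammer_rec add.commute add.left_commute)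
  have h7: "pochhammer (1-L) (Suc j) = A * (1 - L + j)" unfolding A_def by (simp add: pochhammer_Suc)
  have h8: "fact (Suc j) = F * (j+1)" unfolding F_def by (simp add: fact_Suc)
  define X where "X = P * A / (Q * F)"
  have d1: "x + 1 > 0" "x + L + 1 > 0" "x + L + 1 + j > 0" "x + L > 0" "real j + 1 > 0"
    using x L by simp_all
  have "coef L (x+1) j = pochhammer (x+2) j * A / (pochhammer (x+L+2) j * F)"
    unfolding coef_def A_def F_def by (simp add: add_ac)
  also have "\<dots> = P * (x+1+j) / (x+1) * A / (Q * (x+L+1+j) / (x+L+1) * F)"
    unfolding h1 h2 ..
  also have "\<dots> = X * ((x+1+j)*(x+L+1)/((x+1)*(x+L+1+j)))"
    unfolding X_def using d1 Qpos Fpos by (simp add: divide_simps)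
  finally have e1: "coef L (x+1) j = X * ((x+1+j)*(x+L+1)/((x+1)*(x+L+1+j)))" .
  have e2: "coef L x j = X" unfolding coef_def P_def Q_def A_def F_def X_def ..
  have e3: "coef L x (Suc j) = X * ((x+1+j)*(1-L+j)/((x+L+1+j)*(j+1)))"
    unfolding coef_def h3 h4 h7 h8 X_def by (simp add: ac_simps)
  have e4: "coef L (x-1) (Suc j) = X * (x*(1-L+j)/((x+L)*(j+1)))"
  proof -
    have "x - 1 + 1 = x" "x - 1 + L + 1 = x + L" by simp_all
    then show ?thesis unfolding coef_def X_def by (simp only: h5 h6 h7 h8) (simp add: ac_simps)
  qed
  have jj: "real (j+1) = real j + 1" by simp
  show ?thesis unfolding e1 e2 e3 e4 jj by (rule ratQ[OF d1])
qed

lemma sum_shift_top0: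
  fixes c g :: "nat \<Rightarrow> real"
  assumes "c l = 0"
  shows "(\<Sum>k<l. c k * g k) = c 0 * g 0 + (\<Sum>k<l. c (Suc k) * g (Suc k))"
proof -
  have "(\<Sum>k<Suc l. c k * g k) = (\<Sum>k<l. c k * g k) + c l * g l" by (rule sum.lessThan_Suc)
  moreover have "(\<Sum>k<Suc l. c k * g k) = c 0 * g 0 + (\<Sum>k<l. c (Suc k) * g (Suc k))"
    by (rule sum.lessThan_Suc_shift)
  ultimately show ?thesis using assms by simp
qed

lemma TT_rec:
  assumes l: "l > 0" and x: "x \<ge> 0"
  shows "(x+1)*(x+2*real l)/(x+real l+1) * TT l (x+1) t
       = 2*(x+real l) * cos t * TT l x t - (x + real l) * TT l (x-1) t"
proof -
  let ?L = "real l"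
  let ?g = "\<lambda>k::nat. sin ((x + 2*real k + 2) * t)"
  have L1: "?L \<ge> 1" using l by simp
  have c2: "2 * cos t * sin ((x + 2 * real k + 1) * t) = ?g k + sin ((x + 2 * real k) * t)" for k
  proof -
    have "2 * cos t * sin ((x + 2 * real k + 1) * t)
        = sin (t + (x + 2 * real k + 1) * t) - sin (t - (x + 2 * real k + 1) * t)"
      using cos_times_sin[of t "(x + 2 * real k + 1) * t"] by simp
    also have "t + (x + 2 * real k + 1) * t = (x + 2 * real k + 2) * t" by (simp add: algebra_simps)
    also have "t - (x + 2 * real k + 1) * t = - ((x + 2 * real k) * t)" by (simp add: algebra_simps)
    finally show ?thesis by simp
  qed
  have U1: "2 * cos t * TT l x t = (\<Sum>k<l. coef ?L x k * ?g k) + (\<Sum>k<l. coef ?L x k * sin ((x + 2 * real k) * t))"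
    unfolding TT_def sum_distrib_left sum.distrib[symmetric]
    by (rule sum.cong[OF refl]) (subst mult.left_commute, subst c2, simp add: distrib_left)
  have U2: "(\<Sum>k<l. coef ?L x k * sin ((x + 2 * real k) * t)) = sin (x * t) + (\<Sum>k<l. coef ?L x (Suc k) * ?g k)"
    using sum_shift_top0[of "coef ?L x" l "\<lambda>k. sin ((x + 2 * real k) * t)", OF coef_top[OF l]]
    by (simp add: algebra_simps)
  have V: "TT l (x-1) t = sin (x * t) + (\<Sum>k<l. coef ?L (x-1) (Suc k) * ?g k)"
    unfolding TT_def
    using sum_shift_top0[of "coef ?L (x-1)" l "\<lambda>k. sin ((x - 1 + 2 * real k + 1) * t)", OF coef_top[OF l]]
    by (simp add: algebra_simps)
  have W: "TT l (x+1) t = (\<Sum>k<l. coef ?L (x+1) k * ?g k)"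
    unfolding TT_def by (rule sum.cong[OF refl]) (simp add: algebra_simps)
  have "(x+1)*(x+2*?L)/(x+?L+1) * TT l (x+1) t
      = (\<Sum>k<l. (x+?L) * (coef ?L x k + coef ?L x (Suc k) - coef ?L (x-1) (Suc k)) * ?g k)"
    unfolding W sum_distrib_left
    by (rule sum.cong[OF refl]) (simp add: coefQ[OF x L1, symmetric])
  also have "\<dots> = (x+?L) * (2 * cos t * TT l x t - TT l (x-1) t)"
    unfolding U1 U2 V
    by (simp add: sum_distrib_left sum.distrib[symmetric] sum_subtractf[symmetric] algebra_simps)
  finally show ?thesis by (simp add: algebra_simps)
qed

definition beta :: "nat \<Rightarrow> nat \<Rightarrow> real" where
  "beta l k = (-1)^k * real ((2*l-1) choose (l+k)) / 4^(l-1)"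

lemma sin2_sin: "sin (t::real) ^ 2 * sin (a * t) = sin (a*t)/2 - sin ((a+2)*t)/4 - sin ((a-2)*t)/4"
proof -
  have "sin ((a+2)*t) + sin ((a-2)*t) = 2 * sin (a*t) * cos (2*t)"
    using sin_add[of "a*t" "2*t"] sin_diff[of "a*t" "2*t"] by (simp add: algebra_simps)
  also have "cos (2*t) = 1 - 2 * sin t ^ 2" by (rule cos_double_sin)
  finally have e: "sin ((a+2)*t) + sin ((a-2)*t) = 2 * sin (a*t) - 4 * (sin t ^ 2 * sin (a * t))"
    by (simp add: algebra_simps)
  show ?thesis using e by linarith
qed

lemma pascal2: "(Suc (Suc N) choose Suc (Suc j)) = (N choose j) + 2 * (N choose Suc j) + (N choose Suc (Suc j))"
  by simp

lemma beta_top: "l \<ge> 1 \<Longrightarrow> k \<ge> l \<Longrightarrow> beta l k = 0"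
  by (simp add: beta_def binomial_eq_0)

lemma beta_rec:
  assumes l: "l \<ge> 1"
  shows "beta (Suc l) k = beta l k / 2 - beta l (Suc k) / 4
           + (if k = 0 then beta l 0 / 4 else - beta l (k-1) / 4)"
proof -
  define N where "N = 2*l - 1"
  have N: "2*l - 1 = N" "2 * Suc l - 1 = Suc (Suc N)" using l by (auto simp: N_def)
  have l': "Suc l - 1 = Suc (l - 1)" using l by simp
  have p: "(4::real)^(Suc l - 1) = 4 * 4^(l-1)" unfolding l' by simp
  show ?thesis
  proof (cases k)
    case 0
    obtain j where j: "l = Suc j" using l by (cases l) auto
    have Nj: "N - j = l" "j \<le> N" using N j by auto
    have sym: "(N choose j) = (N choose l)"
      using binomial_symmetric[OF Nj(2)] Nj(1) by simp
    have "(Suc (Suc N) choose Suc l) = (N choose j) + 2 * (N choose l) + (N choose Suc l)"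
      using pascal2[of N j] j by simp
    then have "real (Suc (Suc N) choose Suc l) = 3 * real (N choose l) + real (N choose Suc l)"
      using sym by simp
    then show ?thesis unfolding beta_def N p using 0 by (simp add: field_simps)
  next
    case (Suc i)
    have "(Suc (Suc N) choose (Suc l + k)) = (N choose (l + i)) + 2 * (N choose (l+k)) + (N choose (Suc (l + k)))"
      using pascal2[of N "l+i"] Suc by simp
    then show ?thesis unfolding beta_def N p using Suc by (simp add: field_simps)
  qed
qed

lemma sinpow:
  assumes "l \<ge> 1"
  shows "sin t ^ (2*l - 1) = (\<Sum>k<l. beta l k * sin ((2 * real k + 1) * t))"
  using assms
proof (induction l rule: nat_induct_at_least)
  case base
  then show ?case by (simp add: beta_def)
next
  case (Suc l)
  note l = Suc(1)
  let ?b = "beta l"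
  let ?s = "\<lambda>m::real. sin (m * t)"
  have bl: "?b l = 0" "?b (Suc l) = 0" using l by (simp_all add: beta_top)
  have "sin t ^ (2 * Suc l - 1) = sin t ^ 2 * sin t ^ (2*l - 1)"
    using l by (simp add: power_add[symmetric])
  also have "\<dots> = (\<Sum>k<l. ?b k * (sin t ^ 2 * ?s (2 * real k + 1)))"
    unfolding Suc(2) sum_distrib_left by (simp add: ac_simps)
  also have "\<dots> = (\<Sum>k<l. ?b k * ?s (2 * real k + 1)) / 2 - (\<Sum>k<l. ?b k * ?s (2 * real k + 3)) / 4
        - (\<Sum>k<l. ?b k * ?s (2 * real k - 1)) / 4"
    unfolding sin2_sin sum_divide_distrib sum_subtractf[symmetric]
    by (rule sum.cong[OF refl]) (simp add: algebra_simps)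
  also have "(\<Sum>k<l. ?b k * ?s (2 * real k + 1)) = (\<Sum>k<Suc l. ?b k * ?s (2 * real k + 1))"
    using bl by simp
  also have "(\<Sum>k<l. ?b k * ?s (2 * real k + 3)) = (\<Sum>k<Suc l. (if k = 0 then 0 else ?b (k-1)) * ?s (2 * real k + 1))"
    by (subst sum.lessThan_Suc_shift) (simp add: algebra_simps)
  also have "(\<Sum>k<l. ?b k * ?s (2 * real k - 1)) = - ?b 0 * ?s 1 + (\<Sum>k<Suc l. ?b (Suc k) * ?s (2 * real k + 1))"
  proof -
    have "(\<Sum>k<l. ?b k * ?s (2 * real k - 1)) = (\<Sum>k<Suc l. ?b k * ?s (2 * real k - 1))"
      using bl by simp
    also have "\<dots> = ?b 0 * ?s (-1) + (\<Sum>k<l. ?b (Suc k) * ?s (2 * real (Suc k) - 1))"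
      by (subst sum.lessThan_Suc_shift) simp
    also have "(\<Sum>k<l. ?b (Suc k) * ?s (2 * real (Suc k) - 1)) = (\<Sum>k<Suc l. ?b (Suc k) * ?s (2 * real k + 1))"
      using bl by (simp add: algebra_simps)
    finally show ?thesis by simp
  qed
  also have "(\<Sum>k<Suc l. ?b k * ?s (2 * real k + 1)) / 2 -
      (\<Sum>k<Suc l. (if k = 0 then 0 else ?b (k - 1)) * ?s (2 * real k + 1)) / 4 -
      (- ?b 0 * ?s 1 + (\<Sum>k<Suc l. ?b (Suc k) * ?s (2 * real k + 1))) / 4
      = (\<Sum>k<Suc l. (?b k / 2 - ?b (Suc k) / 4 + (if k = 0 then ?b 0 / 4 else - ?b (k-1) / 4)) * ?s (2 * real k + 1))"
  proof -
    have "(\<Sum>k<Suc l. (?b k / 2 - ?b (Suc k) / 4 + (if k = 0 then ?b 0 / 4 else - ?b (k-1) / 4)) * ?s (2 * real k + 1))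
      = (\<Sum>k<Suc l. ?b k * ?s (2 * real k + 1)) / 2 -
      (\<Sum>k<Suc l. (if k = 0 then 0 else ?b (k - 1)) * ?s (2 * real k + 1)) / 4 -
      (\<Sum>k<Suc l. ?b (Suc k) * ?s (2 * real k + 1)) / 4 +
      (\<Sum>k<Suc l. (if k = 0 then ?b 0 / 4 else 0) * ?s (2 * real k + 1))"
      unfolding sum_divide_distrib sum_subtractf[symmetric] sum.distrib[symmetric]
      by (rule sum.cong[OF refl]) (simp add: algebra_simps)
    also have "(\<Sum>k<Suc l. (if k = 0 then ?b 0 / 4 else 0) * ?s (2 * real k + 1)) = ?b 0 / 4 * ?s 1"
      by (subst sum.lessThan_Suc_shift) simp
    finally have X: "(\<Sum>k<Suc l. (?b k / 2 - ?b (Suc k) / 4 + (if k = 0 then ?b 0 / 4 else - ?b (k-1) / 4)) * ?s (2 * real k + 1))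
      = (\<Sum>k<Suc l. ?b k * ?s (2 * real k + 1)) / 2 -
      (\<Sum>k<Suc l. (if k = 0 then 0 else ?b (k - 1)) * ?s (2 * real k + 1)) / 4 -
      (\<Sum>k<Suc l. ?b (Suc k) * ?s (2 * real k + 1)) / 4 + ?b 0 / 4 * ?s 1" .
    have "?b 0 / 4 * ?s 1 = (?b 0 * ?s 1) / 4" "- ?b 0 * ?s 1 = - (?b 0 * ?s 1)" by simp_all
    show ?thesis by (simp only: X) (simp add: field_simps)
  qed
  also have "\<dots> = (\<Sum>k<Suc l. beta (Suc l) k * ?s (2 * real k + 1))"
    using beta_rec[OF l] by simp
  finally show ?case .
qed

lemma step_alg:
  fixes m L K0 K1 K2 A B C s G0 G1 G2 cs :: real
  assumes m: "m \<ge> 0" and L: "L > 0"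
    and g: "(m+2)*G2 = 2*(m+1+L)*cs*G1 - (m+2*L)*G0"
    and tr: "(m+2)*(m+1+2*L)/(m+L+2) * C = 2*(m+1+L)*cs*B - (m+L+1)*A"
    and IH0: "s*G0 = K0*A" and IH1: "s*G1 = K1*B"
    and KS: "K1 = K0*(m+2*L)/(m+L+1)" and KSS: "K2 = K1*(m+1+2*L)/(m+L+2)"
  shows "s*G2 = K2*C"
proof -
  have p: "m+2 > 0" "m+L+1 > 0" "m+L+2 > 0" using m L by auto
  have K0: "(m+2*L)*K0 = (m+L+1)*K1" using KS p by (simp add: field_simps)
  have "(m+2)*(s*G2) = 2*(m+1+L)*cs*(s*G1) - (m+2*L)*(s*G0)"
    using arg_cong[OF g, of "\<lambda>z. s*z"] by (simp add: algebra_simps)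
  also have "\<dots> = 2*(m+1+L)*cs*(K1*B) - ((m+2*L)*K0)*A"
    unfolding IH0 IH1 by (simp add: algebra_simps)
  also have "\<dots> = K1 * (2*(m+1+L)*cs*B - (m+L+1)*A)"
    unfolding K0 by (simp add: algebra_simps)
  also have "\<dots> = K1 * ((m+2)*(m+1+2*L)/(m+L+2) * C)" unfolding tr ..
  also have "\<dots> = (m+2) * (K2 * C)" unfolding KSS using p by (simp add: field_simps)
  finally show ?thesis using p by simp
qed
lemma bS_alg:
  fixes s C F a b :: real
  assumes "b \<noteq> 0" "F \<noteq> 0"
  shows "- (s * (C * a / b) / F) = s * C / F * (- a / b)"
  using assms by (simp add: field_simps)

lemma cS_alg:
  fixes P A Q F k L :: real
  assumes "Q \<noteq> 0" "F \<noteq> 0" "L + 1 + k \<noteq> 0" "k \<ge> 0"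
  shows "(P*(1+k))*(A*(1-L+k))/((Q*(L+1+k))*((k+1)*F)) = P*A/(Q*F) * (-(L-1-k)/(L+1+k))"
proof -
  have "k + 1 \<noteq> 0" "1 + k \<noteq> 0" using assms by auto
  then show ?thesis using assms by (simp add: divide_simps) (simp add: algebra_simps)
qed

lemma beta_coef:
  assumes l: "l > 0" and k: "k < l"
  shows "beta l k = beta l 0 * coef (real l) 0 k"
  using k
proof (induction k)
  case 0
  then show ?case by simp
next
  case (Suc k)
  let ?N = "2*l - 1"
  have kl: "k < l" using Suc by simp
  have b1: "real (Suc (l+k)) * real (?N choose Suc (l+k)) = real (?N - (l+k)) * real (?N choose (l+k))"
  proof -
    have "Suc (l+k) * (?N choose Suc (l+k)) = ?N * ((?N - 1) choose (l+k))" by (rule binomial_absorption)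
    also have "\<dots> = (?N - (l+k)) * (?N choose (l+k))" by (rule binomial_absorb_comp[symmetric])
    finally show ?thesis by (metis of_nat_mult)
  qed
  have Nd: "real (?N - (l+k)) = real l - 1 - real k" using Suc l by (simp add: of_nat_diff)
  have pos: "real (Suc (l+k)) > 0" by simp
  have X: "real (?N choose Suc (l+k)) = real (?N choose (l+k)) * (real l - 1 - real k) / (real l + 1 + real k)"
    using b1 pos unfolding Nd by (simp add: field_simps)
  have bS: "beta l (Suc k) = beta l k * (- (real l - 1 - real k) / (real l + 1 + real k))"
  proof -
    have "beta l (Suc k) = - ((-1)^k * real (?N choose Suc (l+k)) / 4^(l-1))"
      by (simp add: beta_def)
    also have "\<dots> = - ((-1)^k * (real (?N choose (l+k)) * (real l - 1 - real k) / (real l + 1 + real k)) / 4^(l-1))"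
      unfolding X ..
    also have "\<dots> = beta l k * (- (real l - 1 - real k) / (real l + 1 + real k))"
      unfolding beta_def by (rule bS_alg) simp_all
    finally show ?thesis .
  qed
  have cS: "coef (real l) 0 (Suc k) = coef (real l) 0 k * (- (real l - 1 - real k) / (real l + 1 + real k))"
  proof -
    have p: "pochhammer (real l + 1) k \<noteq> 0" using pochhammer_pos[of "real l + 1" k] by simp
    have e: "coef (real l) 0 (Suc k) = pochhammer 1 (Suc k) * pochhammer (1 - real l) (Suc k)
              / (pochhammer (real l + 1) (Suc k) * fact (Suc k))"
      "coef (real l) 0 k = pochhammer 1 k * pochhammer (1 - real l) k / (pochhammer (real l + 1) k * fact k)"
      "real (Suc k) = real k + 1" by (simp_all add: coef_def)
    show ?thesis unfolding e pochhammer_Suc fact_Suc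
      by (rule cS_alg) (use p in simp_all)
  qed
  show ?case unfolding bS cS Suc.IH[OF kl] by simp
qed

primrec Kf :: "nat \<Rightarrow> nat \<Rightarrow> real" where
  "Kf l 0 = beta l 0"
| "Kf l (Suc n) = Kf l n * (real n + 2 * real l) / (real n + real l + 1)"

lemma Kf_pos: "l > 0 \<Longrightarrow> Kf l n > 0"
  by (induction n) (auto simp: beta_def)

declare Kf.simps(2)[simp del]

lemma cancel_frac: "(a::real) \<noteq> 0 \<Longrightarrow> b \<noteq> 0 \<Longrightarrow> a / b * X = Y \<Longrightarrow> X = b / a * Y"
  by (auto simp: field_simps)

lemma TT_minus1: "TT l (-1) t = 0"
  unfolding TT_def
proof (rule sum.neutral, intro ballI)
  fix k assume "k \<in> {..<l}"
  show "coef (real l) (- 1) k * sin ((- 1 + 2 * real k + 1) * t) = 0"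
    by (cases k) (simp_all add: coef_minus1)
qed

lemma geg0: "gegenbauer 0 L x = 1" by (simp add: gegenbauer_def)
lemma geg1: "gegenbauer (Suc 0) L x = 2 * L * x" by (simp add: gegenbauer_def)

lemma P0:
  assumes l: "l > 0"
  shows "sin t ^ (2*l - 1) * gegenbauer 0 (real l) (cos t) = Kf l 0 * TT l 0 t"
proof -
  have "sin t ^ (2*l - 1) = (\<Sum>k<l. beta l k * sin ((2 * real k + 1) * t))"
    using l by (intro sinpow) simp
  also have "\<dots> = Kf l 0 * TT l 0 t"
    unfolding TT_def sum_distrib_left
  proof (rule sum.cong[OF refl])
    fix k assume "k \<in> {..<l}"
    then have "beta l k = beta l 0 * coef (real l) 0 k" using beta_coef[OF l, of k] by simp
    then show "beta l k * sin ((2 * real k + 1) * t) = Kf l 0 * (coef (real l) 0 k * sin ((0 + 2 * real k + 1) * t))"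
      by simp
  qed
  finally show ?thesis by (simp add: geg0)
qed

lemma P1:
  assumes l: "l > 0"
  shows "sin t ^ (2*l - 1) * gegenbauer 1 (real l) (cos t) = Kf l 1 * TT l 1 t"
proof -
  have r: "(0+1)*(0+2*real l)/(0+real l+1) * TT l (0+1) t
       = 2*(0+real l) * cos t * TT l 0 t - (0 + real l) * TT l (0-1) t"
    by (rule TT_rec[OF l]) simp
  have lp: "real l > 0" using l by simp
  have "(2 * real l) / (real l + 1) * TT l 1 t = 2 * real l * cos t * TT l 0 t"
    using r by (simp add: TT_minus1)
  note h = this
  have "TT l 1 t = (real l + 1) / (2 * real l) * (2 * real l * cos t * TT l 0 t)"
    by (rule cancel_frac[OF _ _ h]) (use lp in simp_all)
  then have "TT l 1 t = (real l + 1) * cos t * TT l 0 t" using lp by simp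
  then show ?thesis using P0[OF l, of t] lp by (simp add: geg1 geg0 Kf.simps(2) field_simps)
qed

lemma Pn:
  assumes l: "l > 0"
  shows "sin t ^ (2*l - 1) * gegenbauer n (real l) (cos t) = Kf l n * TT l (real n) t"
proof -
  have "(sin t ^ (2*l - 1) * gegenbauer n (real l) (cos t) = Kf l n * TT l (real n) t) \<and>
        (sin t ^ (2*l - 1) * gegenbauer (Suc n) (real l) (cos t) = Kf l (Suc n) * TT l (real (Suc n)) t)"
  proof (induction n)
    case 0
    then show ?case using P0[OF l] P1[OF l] by simp
  next
    case (Suc n)
    let ?L = "real l"
    let ?s = "sin t ^ (2*l - 1)"
    have IH0: "?s * gegenbauer n ?L (cos t) = Kf l n * TT l (real n) t" using Suc by blast
    have IH1: "?s * gegenbauer (Suc n) ?L (cos t) = Kf l (Suc n) * TT l (real (Suc n)) t" using Suc by blast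
    have g: "real (Suc n + 1) * gegenbauer (Suc n + 1) ?L (cos t)
       = 2 * (real (Suc n) + ?L) * cos t * gegenbauer (Suc n) ?L (cos t) - (real (Suc n) + 2*?L - 1) * gegenbauer (Suc n - 1) ?L (cos t)"
      by (rule geg_rec) simp
    have g': "(real n+2)*gegenbauer (Suc (Suc n)) ?L (cos t)
       = 2*(real n+1+?L)*cos t*gegenbauer (Suc n) ?L (cos t) - (real n+2*?L)*gegenbauer n ?L (cos t)"
      using g by (simp add: algebra_simps)
    have e1: "real (Suc n) + 1 = real (Suc (Suc n))" "real (Suc n) - 1 = real n" by simp_all
    have tr: "(real (Suc n)+1)*(real (Suc n)+2*?L)/(real (Suc n)+?L+1) * TT l (real (Suc (Suc n))) t
       = 2*(real (Suc n)+?L) * cos t * TT l (real (Suc n)) t - (real (Suc n) + ?L) * TT l (real n) t"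
      using TT_rec[OF l, of "real (Suc n)" t] unfolding e1 by simp
    have tr': "(real n+2)*(real n+1+2*?L)/(real n+?L+2) * TT l (real (Suc (Suc n))) t
       = 2*(real n+1+?L) * cos t * TT l (real (Suc n)) t - (real n+?L+1) * TT l (real n) t"
      using tr by (simp add: algebra_simps)
    have KS: "Kf l (Suc n) = Kf l n * (real n + 2 * ?L) / (real n + ?L + 1)" by (simp add: Kf.simps(2))
    have KSS: "Kf l (Suc (Suc n)) = Kf l (Suc n) * (real n + 1 + 2 * ?L) / (real n + ?L + 2)"
      by (simp add: Kf.simps(2) add_ac)
    have "?s * gegenbauer (Suc (Suc n)) ?L (cos t) = Kf l (Suc (Suc n)) * TT l (real (Suc (Suc n))) t"
      by (rule step_alg[OF _ _ g' tr' IH0 IH1 KS KSS]) (use l in simp_all)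
    then show ?case using IH1 by simp
  qed
  then show ?thesis by blast
qed

lemma subst_cos:
  fixes g :: "real \<Rightarrow> 'a::euclidean_space"
  assumes g: "continuous_on {-1..1} g"
  shows "integral {-1..1} g = integral {0..pi} (\<lambda>t. sin t *\<^sub>R g (cos t))"
proof -
  have "((\<lambda>x. (- sin x) *\<^sub>R g (cos x)) has_integral
      (integral {cos 0..cos pi} g - integral {cos pi..cos 0} g)) {0..pi}"
  proof (rule has_integral_substitution_general[of "{}" 0 pi cos "-1" 1 g])
    show "cos ` {0..pi} \<subseteq> {-1..1}" by auto
    show "continuous_on {0..pi} cos" by (intro continuous_intros)
    show "(cos has_real_derivative - sin x) (at x within {0..pi})" for x
      by (rule has_field_derivative_at_within) (rule DERIV_cos)
  qed (use g pi_ge_zero in auto)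
  then have h: "((\<lambda>x. - (sin x *\<^sub>R g (cos x))) has_integral (- integral {-1..1} g)) {0..pi}"
    by simp
  have "((\<lambda>x. sin x *\<^sub>R g (cos x)) has_integral (integral {-1..1} g)) {0..pi}"
    using has_integral_neg[OF h] by simp
  then show ?thesis by (simp add: integral_unique)
qed

lemma int_cos_nat:
  "((\<lambda>t. cos (real p * t)) has_integral (if p = 0 then pi else 0)) {0..pi}"
proof (cases "p = 0")
  case True
  then show ?thesis using has_integral_const_real[of "1::real" 0 pi] by simp
next
  case False
  have "((\<lambda>t. cos (real p * t)) has_integral (sin (real p * pi) / real p - sin (real p * 0) / real p)) {0..pi}"
  proof (rule fundamental_theorem_of_calculus)
    show "0 \<le> pi" by simp
    show "((\<lambda>t. sin (real p * t) / real p) has_vector_derivative cos (real p * x)) (at x within {0..pi})" for x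
      unfolding has_real_derivative_iff_has_vector_derivative[symmetric]
      using False by (auto intro!: derivative_eq_intros)
  qed
  moreover have "sin (real p * pi) = 0" by (simp add: sin_npi)
  ultimately show ?thesis using False by simp
qed

definition Idm :: "nat \<Rightarrow> nat \<Rightarrow> real" where
  "Idm d m = integral {0..pi} (\<lambda>t. (2*cos t)^d * sin t * sin (real m * t))"

lemma Idm0:
  assumes m: "m \<ge> 1"
  shows "Idm 0 m = (if m = 1 then pi/2 else 0)"
proof -
  have e: "(2*cos t)^0 * sin t * sin (real m * t) = (cos (real (m-1) * t) - cos (real (m+1) * t)) / 2" for t
  proof -
    have "sin t * sin (real m * t) = (cos (t - real m * t) - cos (t + real m * t)) / 2"
      by (rule sin_times_sin)
    also have "t - real m * t = - (real (m-1) * t)" using m by (simp add: of_nat_diff algebra_simps)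
    also have "t + real m * t = real (m+1) * t" by (simp add: algebra_simps)
    finally show ?thesis by simp
  qed
  have "((\<lambda>t. (cos (real (m-1) * t) - cos (real (m+1) * t)) / 2) has_integral
        (((if m - 1 = 0 then pi else 0) - (if m + 1 = 0 then pi else 0)) / 2)) {0..pi}"
    by (intro has_integral_divide has_integral_diff int_cos_nat)
  then have "Idm 0 m = ((if m - 1 = 0 then pi else 0) - (if m + 1 = 0 then pi else 0)) / 2"
    unfolding Idm_def e by (rule integral_unique)
  then show ?thesis using m by auto
qed

lemma cos_sin_sum: "2 * cos (t::real) * sin (a * t) = sin ((a+1) * t) + sin ((a-1) * t)"
proof -
  have "cos t * sin (a * t) = (sin (t + a * t) - sin (t - a * t)) / 2" by (rule cos_times_sin)
  also have "t + a * t = (a+1) * t" by (simp add: algebra_simps)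
  also have "t - a * t = - ((a - 1) * t)" by (simp add: algebra_simps)
  finally show ?thesis by simp
qed

lemma Idm_val:
  assumes "m \<ge> d + 1"
  shows "Idm d m = (if m = d + 1 then pi/2 else 0)"
  using assms
proof (induction d arbitrary: m)
  case 0
  then show ?case using Idm0[of m] by simp
next
  case (Suc d)
  have m1: "m \<ge> 1" using Suc by simp
  have e: "(2*cos t)^(Suc d) * sin t * sin (real m * t)
      = (2*cos t)^d * sin t * sin (real (m+1) * t) + (2*cos t)^d * sin t * sin (real (m-1) * t)" for t
  proof -
    have "(2*cos t)^(Suc d) * sin t * sin (real m * t) = (2*cos t)^d * sin t * (2 * cos t * sin (real m * t))"
      by (simp add: algebra_simps)
    also have "2 * cos t * sin (real m * t) = sin ((real m + 1) * t) + sin ((real m - 1) * t)"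
      by (rule cos_sin_sum)
    finally have X: "(2*cos t)^(Suc d) * sin t * sin (real m * t) = (2*cos t)^d * sin t * (sin ((real m + 1) * t) + sin ((real m - 1) * t))" .
    have r: "real m + 1 = real (m+1)" "real m - 1 = real (m - 1)" using m1 by (simp_all add: of_nat_diff)
    show ?thesis unfolding X r by (simp only: distrib_left)
  qed
  have i1: "(\<lambda>t. (2*cos t)^d * sin t * sin (real k * t)) integrable_on {0..pi}" for k
    by (intro integrable_continuous_interval continuous_intros)
  have "Idm (Suc d) m = Idm d (m+1) + Idm d (m-1)"
    unfolding Idm_def e by (rule integral_add[OF i1 i1])
  also have "\<dots> = (if m = Suc d + 1 then pi/2 else 0)"
    using Suc.IH[of "m+1"] Suc.IH[of "m-1"] Suc.prems by auto
  finally show ?case .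
qed

lemma geg_sin_int:
  "integral {0..pi} (\<lambda>t. sin t * sin (real m * t) * gegenbauer n L (cos t))
    = (\<Sum>k\<le>n div 2. (-1)^k * pochhammer L (n - k) / (fact k * fact (n - 2*k)) * Idm (n - 2*k) m)"
proof -
  have "integral {0..pi} (\<lambda>t. sin t * sin (real m * t) * gegenbauer n L (cos t))
      = integral {0..pi} (\<lambda>t. \<Sum>k\<le>n div 2. (-1)^k * pochhammer L (n - k) / (fact k * fact (n - 2*k)) *
            ((2*cos t)^(n-2*k) * sin t * sin (real m * t)))"
    unfolding gegenbauer_def sum_distrib_left by (rule integral_cong) (simp add: algebra_simps)
  also have "\<dots> = (\<Sum>k\<le>n div 2. integral {0..pi} (\<lambda>t. (-1)^k * pochhammer L (n - k) / (fact k * fact (n - 2*k)) *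
            ((2*cos t)^(n-2*k) * sin t * sin (real m * t))))"
    by (rule integral_sum) (auto intro!: integrable_continuous_interval continuous_intros)
  also have "\<dots> = (\<Sum>k\<le>n div 2. (-1)^k * pochhammer L (n - k) / (fact k * fact (n - 2*k)) * Idm (n - 2*k) m)"
    unfolding Idm_def by (rule sum.cong[OF refl]) (rule integral_mult_right)
  finally show ?thesis .
qed

lemma geg_sin_int_val:
  "integral {0..pi} (\<lambda>t. sin t * sin (real (n + 2*j + 1) * t) * gegenbauer n L (cos t))
    = (if j = 0 then pochhammer L n / fact n * (pi/2) else 0)"
proof -
  have "(\<Sum>k\<le>n div 2. (-1)^k * pochhammer L (n - k) / (fact k * fact (n - 2*k)) * Idm (n - 2*k) (n + 2*j + 1))
      = (\<Sum>k\<le>n div 2. (if k = 0 \<and> j = 0 then pochhammer L n / fact n * (pi/2) else 0))"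
  proof (rule sum.cong[OF refl])
    fix k assume "k \<in> {..n div 2}"
    then have "n + 2*j + 1 \<ge> n - 2*k + 1" by simp
    then have "Idm (n - 2*k) (n + 2*j + 1) = (if n + 2*j + 1 = n - 2*k + 1 then pi/2 else 0)"
      by (rule Idm_val)
    moreover have "(n + 2*j + 1 = n - 2*k + 1) \<longleftrightarrow> (k = 0 \<and> j = 0)" using \<open>k \<in> {..n div 2}\<close> by auto
    ultimately show "(-1)^k * pochhammer L (n - k) / (fact k * fact (n - 2*k)) * Idm (n - 2*k) (n + 2*j + 1)
        = (if k = 0 \<and> j = 0 then pochhammer L n / fact n * (pi/2) else 0)" by auto
  qed
  also have "\<dots> = (if j = 0 then pochhammer L n / fact n * (pi/2) else 0)"
    by (simp add: sum.delta)
  finally show ?thesis unfolding geg_sin_int .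
qed

definition Jk :: "complex \<Rightarrow> complex" where "Jk w = (w + inverse w) / 2"

lemma norm_sq_sum: "cmod (w - 1) ^ 2 + cmod (w + 1) ^ 2 = 2 * cmod w ^ 2 + 2"
  unfolding cmod_power2 by (simp add: power2_eq_square algebra_simps)

lemma KJ:
  assumes "w \<noteq> 0"
  shows "cmod (Jk w - 1) + cmod (Jk w + 1) = cmod w + inverse (cmod w)"
proof -
  have e1: "Jk w - 1 = (w - 1)^2 / (2*w)" "Jk w + 1 = (w + 1)^2 / (2*w)"
    using assms unfolding Jk_def by (simp_all add: field_simps power2_eq_square)
  have r: "cmod w > 0" using assms by simp
  have "cmod (Jk w - 1) + cmod (Jk w + 1) = (cmod (w - 1) ^ 2 + cmod (w + 1) ^ 2) / (2 * cmod w)"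
    unfolding e1 by (simp add: norm_divide norm_mult norm_power add_divide_distrib)
  also have "\<dots> = cmod w + inverse (cmod w)" unfolding norm_sq_sum using r
    by (simp add: field_simps power2_eq_square)
  finally show ?thesis .
qed

lemma rinv_mono:
  fixes r rho :: real
  assumes "1 \<le> r" "r \<le> rho"
  shows "r + inverse r \<le> rho + inverse rho"
proof -
  have "rho + inverse rho - (r + inverse r) = (rho - r) * (1 - inverse (r * rho))"
    using assms by (simp add: field_simps)
  moreover have "inverse (r * rho) \<le> 1"
  proof -
    have "inverse r \<le> 1" "inverse rho \<le> 1" "inverse r \<ge> 0" using assms by (auto simp: inverse_le_1_iff)
    then have "inverse r * inverse rho \<le> 1" using assms by (intro mult_le_one) auto
    then show ?thesis by (simp add: inverse_mult_distrib)
  qed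
  ultimately show ?thesis using assms by (smt (verit) mult_nonneg_nonneg)
qed

lemma Jk_in_region:
  assumes "1 \<le> cmod w" "cmod w \<le> rho"
  shows "Jk w \<in> bernstein_region rho"
proof -
  have "w \<noteq> 0" using assms by auto
  then show ?thesis unfolding bernstein_region_def using KJ rinv_mono[OF assms] by simp
qed

lemma real_in_region:
  assumes "rho > 1" "x \<in> {-1..1::real}"
  shows "complex_of_real x \<in> bernstein_region rho"
proof -
  have a: "cmod (complex_of_real x - 1) = \<bar>x - 1\<bar>" "cmod (complex_of_real x + 1) = \<bar>x + 1\<bar>"
    by (metis norm_of_real of_real_1 of_real_diff, metis norm_of_real of_real_1 of_real_add)
  have "cmod (complex_of_real x - 1) + cmod (complex_of_real x + 1) = 2"
    unfolding a using assms by auto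
  moreover have "2 \<le> rho + inverse rho" using rinv_mono[of 1 rho] assms by simp
  ultimately show ?thesis unfolding bernstein_region_def by simp
qed

lemma ellipse_eq: "bernstein_ellipse rho = Jk \<circ> circlepath 0 rho"
proof
  fix t
  have c: "circlepath 0 rho t = complex_of_real rho * cis (2*pi*t)"
    by (simp add: circlepath cis_conv_exp mult_ac)
  show "bernstein_ellipse rho t = (Jk \<circ> circlepath 0 rho) t"
    unfolding bernstein_ellipse_def o_def c Jk_def
    by (simp add: inverse_mult_distrib of_real_inverse)
qed

lemma deriv_Jk: "w \<noteq> 0 \<Longrightarrow> deriv Jk w = (1 - inverse (w^2)) / 2"
  unfolding Jk_def
  by (rule DERIV_imp_deriv) (auto intro!: derivative_eq_intros simp: power2_eq_square field_simps)

lemma Jk_analytic: "Jk analytic_on (- {0})"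
  unfolding Jk_def by (subst analytic_on_open) (auto intro!: holomorphic_intros)

lemma jinv_Jk:
  assumes "cmod w > 1"
  shows "joukowski_inv (Jk w) = w"
proof -
  have w0: "w \<noteq> 0" using assms by auto
  define q where "q = (w - inverse w) / 2"
  have sq: "Jk w ^ 2 - 1 = q ^ 2" unfolding Jk_def q_def using w0
    by (simp add: field_simps power2_eq_square)
  have hp: "csqrt (Jk w ^ 2 - 1) ^ 2 = q ^ 2" using power2_csqrt[of "Jk w ^ 2 - 1"] sq by simp
  have cs: "csqrt (Jk w ^ 2 - 1) = q \<or> csqrt (Jk w ^ 2 - 1) = - q"
    using power2_eq_iff[of "csqrt (Jk w ^ 2 - 1)" q] hp by blast
  have p1: "Jk w + q = w" "Jk w - q = inverse w" unfolding Jk_def q_def by (simp_all add: field_simps)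
  have ni: "cmod (inverse w) < 1" using assms by (simp add: norm_inverse inverse_less_1_iff)
  from cs show ?thesis
  proof
    assume h: "csqrt (Jk w ^ 2 - 1) = q"
    then show ?thesis unfolding joukowski_inv_def h p1 using assms by simp
  next
    assume h: "csqrt (Jk w ^ 2 - 1) = - q"
    have "Jk w + - q = inverse w" "Jk w - - q = w" using p1 by simp_all
    then show ?thesis unfolding joukowski_inv_def h using ni by simp
  qed
qed

lemma Jk_cis: "Jk (cis t) = complex_of_real (cos t)"
  unfolding Jk_def by (simp add: cis.ctr complex_eq_iff)

lemma integrand_cis:
  "(1 - inverse ((cis t)^2)) / 2 * (F / (cis t)^m) * 1 * \<i> * cis t
     = complex_of_real (- sin t) * cis (- (real m * t)) * F"
proof -
  have i2: "inverse ((cis t)^2) = cis (- (2*t))" by (simp add: Complex.DeMoivre)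
  have d: "cis t - cis (- t) = 2 * \<i> * complex_of_real (sin t)"
    by (simp add: complex_eq_iff)
  have "(1 - inverse ((cis t)^2)) / 2 * \<i> * cis t = (cis t - cis (- (2*t)) * cis t) * \<i> / 2"
    unfolding i2 by (simp add: algebra_simps)
  also have "cis (- (2*t)) * cis t = cis (- t)" by (simp add: cis_mult)
  also have "(cis t - cis (- t)) * \<i> / 2 = complex_of_real (- sin t)" unfolding d by (simp add: complex_eq_iff)
  finally have a: "(1 - inverse ((cis t)^2)) / 2 * \<i> * cis t = complex_of_real (- sin t)" .
  have b: "F / (cis t)^m = cis (- (real m * t)) * F"
    by (simp add: Complex.DeMoivre divide_inverse mult.commute)
  have "(1 - inverse ((cis t)^2)) / 2 * (F / (cis t)^m) * 1 * \<i> * cis t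
      = ((1 - inverse ((cis t)^2)) / 2 * \<i> * cis t) * (F / (cis t)^m)" by (simp add: ac_simps)
  then show ?thesis unfolding a b by (simp add: ac_simps)
qed

lemma contour_to_theta:
  assumes rho: "rho > 1" and T: "open T" "bernstein_region rho \<subseteq> T" "f holomorphic_on T"
  shows "contour_integral (bernstein_ellipse rho) (\<lambda>z. f z / joukowski_inv z ^ m)
     = integral {0..2*pi} (\<lambda>t. complex_of_real (- sin t) * cis (- (real m * t)) * f (complex_of_real (cos t)))"
proof -
  define H where "H w = (1 - inverse (w^2)) / 2 * (f (Jk w) / w^m)" for w
  have pimg: "path_image (circlepath 0 rho) \<subseteq> - {0}" using rho by auto
  have "contour_integral (bernstein_ellipse rho) (\<lambda>z. f z / joukowski_inv z ^ m)
      = contour_integral (circlepath 0 rho) (\<lambda>w. deriv Jk w * (f (Jk w) / joukowski_inv (Jk w) ^ m))"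
    unfolding ellipse_eq by (rule contour_integral_comp_analyticW[OF Jk_analytic valid_path_circlepath pimg])
  also have "\<dots> = contour_integral (circlepath 0 rho) H"
  proof (rule contour_integral_eq)
    fix w assume "w \<in> path_image (circlepath 0 rho)"
    then have w: "cmod w = rho" using rho by auto
    then have "w \<noteq> 0" "cmod w > 1" using rho by auto
    then show "deriv Jk w * (f (Jk w) / joukowski_inv (Jk w) ^ m) = H w"
      unfolding H_def by (simp add: deriv_Jk jinv_Jk)
  qed
  also have "\<dots> = contour_integral (circlepath 0 1) H"
  proof -
    define S where "S = (- {0}) \<inter> Jk -` T"
    have oS: "open S" unfolding S_def
    proof (rule continuous_open_preimage)
      show "continuous_on (- {0}) Jk" unfolding Jk_def by (intro continuous_intros) auto
    qed (use T in auto)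
    have hS: "H holomorphic_on S"
    proof -
      have "(f \<circ> Jk) holomorphic_on S"
      proof (rule holomorphic_on_compose)
        show "Jk holomorphic_on S" unfolding Jk_def S_def by (intro holomorphic_intros) auto
        show "f holomorphic_on Jk ` S" using T(3) by (rule holomorphic_on_subset) (auto simp: S_def)
      qed
      then have "(\<lambda>w. f (Jk w)) holomorphic_on S" by (simp add: o_def)
      then show ?thesis unfolding H_def S_def by (intro holomorphic_intros) auto
    qed
    have hom: "homotopic_loops S (circlepath 0 rho) (circlepath 0 1)"
    proof (rule homotopic_loops_linear)
      fix t :: real assume t: "t \<in> {0..1}"
      define e where "e = exp (2 * of_real pi * \<i> * of_real t)"
      have ne: "cmod e = 1" unfolding e_def by (simp add: norm_exp_eq_Re)
      show "closed_segment (circlepath 0 rho t) (circlepath 0 1 t) \<subseteq> S"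
      proof
        fix z assume "z \<in> closed_segment (circlepath 0 rho t) (circlepath 0 1 t)"
        then obtain u where u: "0 \<le> u" "u \<le> 1" "z = (1 - u) *\<^sub>R (of_real rho * e) + u *\<^sub>R e"
          unfolding closed_segment_def circlepath e_def by auto
        define r where "r = (1 - u) * rho + u"
        have z: "z = of_real r * e" unfolding u(3) r_def by (simp add: scaleR_conv_of_real algebra_simps)
        have d1: "r - 1 = (1 - u) * (rho - 1)" "rho - r = u * (rho - 1)" unfolding r_def by (simp_all add: algebra_simps)
        have "(1 - u) * (rho - 1) \<ge> 0" "u * (rho - 1) \<ge> 0" using u rho by simp_all
        then have r1: "1 \<le> r" "r \<le> rho" using d1 by linarith+
        have nz: "cmod z = r" unfolding z using ne r1 by (simp add: norm_mult)
        have "Jk z \<in> bernstein_region rho" by (rule Jk_in_region) (use nz r1 in auto)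
        then show "z \<in> S" unfolding S_def using T(2) nz r1 by auto
      qed
    qed auto
    show ?thesis
      by (rule Cauchy_theorem_homotopic_loops[OF hom oS hS]) auto
  qed
  also have "\<dots> = integral {0..2*pi} (\<lambda>t. H (cis t) * 1 * \<i> * cis t)"
    unfolding circlepath_def using contour_integral_part_circlepath_eq[of 0 "2*pi" 0 1 H] by simp
  also have "\<dots> = integral {0..2*pi} (\<lambda>t. complex_of_real (- sin t) * cis (- (real m * t)) * f (complex_of_real (cos t)))"
  proof (rule integral_cong)
    fix t assume "t \<in> {0..2*pi}"
    show "H (cis t) * 1 * \<i> * cis t = complex_of_real (- sin t) * cis (- (real m * t)) * f (complex_of_real (cos t))"
      unfolding H_def Jk_cis by (rule integrand_cis)
  qed
  finally show ?thesis .
qed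

lemma cis_2pi_shift: "cis (- (real m * (2*pi - t))) = cis (real m * t)"
proof -
  have "cis (- (real m * (2*pi - t))) = cis (real m * t) * cis (real m * (-(2*pi)))"
    by (simp add: cis_mult algebra_simps)
  also have "cis (real m * (-(2*pi))) = cis (- (2*pi)) ^ m" by (simp add: Complex.DeMoivre)
  also have "cis (- (2*pi)) = 1" by (simp add: complex_eq_iff)
  finally show ?thesis by simp
qed

lemma fold_2pi:
  fixes phi :: "real \<Rightarrow> complex"
  assumes cont: "continuous_on UNIV phi" and sym: "\<And>t. phi (2*pi - t) = phi t"
  shows "integral {0..2*pi} (\<lambda>t. complex_of_real (- sin t) * cis (- (real m * t)) * phi t)
       = 2 * \<i> * integral {0..pi} (\<lambda>t. complex_of_real (sin t * sin (real m * t)) * phi t)"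
proof -
  define G where "G t = complex_of_real (- sin t) * cis (- (real m * t)) * phi t" for t
  have cG: "continuous_on UNIV G" unfolding G_def
    by (intro continuous_intros continuous_on_compose2[OF cont]) (auto simp: cis_conv_exp)
  have iG: "G integrable_on {a..b}" for a b
    by (rule integrable_continuous_interval) (rule continuous_on_subset[OF cG], simp)
  have "integral {0..2*pi} G = integral {0..pi} G + integral {pi..2*pi} G"
    using Henstock_Kurzweil_Integration.integral_combine[where a=0 and c=pi and b="2*pi" and f=G] iG by simp
  also have "integral {pi..2*pi} G = integral {0..pi} (\<lambda>t. G (2*pi - t))"
  proof -
    have "integral {0..pi} (\<lambda>t. G (2*pi - t)) = integral {- 0..- (- pi)} (\<lambda>x. (\<lambda>y. G (2*pi + y)) (- x))"
      by simp
    also have "\<dots> = integral {- pi..0} (\<lambda>y. G (2*pi + y))" by (rule Henstock_Kurzweil_Integration.integral_reflect_real[where a="-pi" and b=0 and f="\<lambda>y. G (2*pi + y)"])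
    also have "\<dots> = integral {- pi..0} (G \<circ> (+) (2*pi))" by (simp add: o_def)
    also have "\<dots> = integral {- pi + 2*pi..0 + 2*pi} G" by (rule integral_shift_Icc_real)
    finally show ?thesis by simp
  qed
  also have "integral {0..pi} G + integral {0..pi} (\<lambda>t. G (2*pi - t))
      = integral {0..pi} (\<lambda>t. G t + G (2*pi - t))"
  proof (rule integral_add[symmetric])
    show "G integrable_on {0..pi}" by (rule iG)
    have "continuous_on UNIV (\<lambda>t. G (2*pi - t))"
      by (rule continuous_on_compose2[OF cG]) (auto intro!: continuous_intros)
    then show "(\<lambda>t. G (2*pi - t)) integrable_on {0..pi}"
      by (rule integrable_continuous_interval[OF continuous_on_subset]) simp
  qed
  also have "\<dots> = integral {0..pi} (\<lambda>t. 2 * \<i> * (complex_of_real (sin t * sin (real m * t)) * phi t))"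
  proof (rule integral_cong)
    fix t :: real
    have d: "cis (real m * t) - cis (- (real m * t)) = 2 * \<i> * complex_of_real (sin (real m * t))"
      by (simp add: complex_eq_iff)
    have "G t + G (2*pi - t) = complex_of_real (sin t) * phi t * (cis (real m * t) - cis (- (real m * t)))"
    proof -
      have "sin (2*pi - t) = - sin t" by (simp add: sin_diff)
      then show ?thesis unfolding G_def sym cis_2pi_shift by (simp add: algebra_simps)
    qed
    also have "\<dots> = 2 * \<i> * (complex_of_real (sin t * sin (real m * t)) * phi t)"
      unfolding d by (simp add: algebra_simps)
    finally show "G t + G (2*pi - t) = 2 * \<i> * (complex_of_real (sin t * sin (real m * t)) * phi t)" .
  qed
  also have "\<dots> = 2 * \<i> * integral {0..pi} (\<lambda>t. complex_of_real (sin t * sin (real m * t)) * phi t)"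
    by simp
  finally show ?thesis unfolding G_def .
qed

lemma W_cos:
  assumes l: "l \<ge> 1" and t: "t \<in> {0..pi}"
  shows "sin t * gegenbauer_weight (real l) (cos t) = sin t * sin t ^ (2*l - 1)"
proof -
  have s0: "sin t \<ge> 0" using t by (simp add: sin_ge_zero)
  have e: "1 - (cos t)^2 = (sin t)^2" by (simp add: sin_squared_eq)
  show ?thesis
  proof (cases "sin t = 0")
    case True
    then show ?thesis by simp
  next
    case False
    then have sp: "sin t > 0" using s0 by simp
    have p2: "(sin t)^2 = sin t powr 2" using sp by (simp add: powr_numeral)
    have "gegenbauer_weight (real l) (cos t) = ((sin t) powr 2) powr (real l - 1/2)"
      unfolding gegenbauer_weight_def e p2 ..
    also have "\<dots> = sin t powr (2 * (real l - 1/2))" by (rule powr_powr)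
    also have "2 * (real l - 1/2) = real (2*l - 1)" using l by (simp add: of_nat_diff)
    also have "sin t powr real (2*l - 1) = sin t ^ (2*l - 1)" using sp by (simp add: powr_realpow)
    finally show ?thesis by simp
  qed
qed

lemma W_cont:
  assumes l: "l \<ge> 1"
  shows "continuous_on {-1..1} (gegenbauer_weight (real l))"
proof -
  have H: "\<forall>x\<in>{-1..1::real}. 0 \<le> 1 - x^2 \<and> (1 - x^2 = 0 \<longrightarrow> 0 < real l - 1/2)"
  proof
    fix x :: real assume "x \<in> {-1..1}"
    then have "\<bar>x\<bar> \<le> 1" by auto
    then have "x^2 \<le> 1" by (simp add: abs_square_le_1)
    then show "0 \<le> 1 - x^2 \<and> (1 - x^2 = 0 \<longrightarrow> 0 < real l - 1/2)" using l by simp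
  qed
  have c1: "continuous_on {-1..1::real} (\<lambda>x. 1 - x^2)" by (intro continuous_intros)
  have c2: "continuous_on {-1..1::real} (\<lambda>x. real l - 1/2)" by (intro continuous_intros)
  show ?thesis using continuous_on_powr'[OF c1 c2 H] unfolding gegenbauer_weight_def[abs_def] .
qed

lemma geg_cont: "continuous_on S (gegenbauer n L)"
  unfolding gegenbauer_def[abs_def] by (intro continuous_intros)

lemma key_pt:
  assumes l: "l > 0" and t: "t \<in> {0..pi}"
  shows "sin t * (gegenbauer_weight (real l) (cos t) * gegenbauer n (real l) (cos t))
    = (\<Sum>k<l. Kf l n * coef (real l) (real n) k * (sin t * sin (real (n + 2*k + 1) * t)))"
proof -
  have "sin t * (gegenbauer_weight (real l) (cos t) * gegenbauer n (real l) (cos t))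
      = sin t * (sin t ^ (2*l - 1) * gegenbauer n (real l) (cos t))"
    using W_cos[of l t] l t by (simp add: mult.assoc[symmetric])
  also have "\<dots> = sin t * (Kf l n * TT l (real n) t)" using Pn[OF l] by simp
  also have "\<dots> = (\<Sum>k<l. Kf l n * coef (real l) (real n) k * (sin t * sin (real (n + 2*k + 1) * t)))"
    unfolding TT_def sum_distrib_left by (rule sum.cong[OF refl]) (simp add: algebra_simps)
  finally show ?thesis .
qed

lemma h_val:
  assumes l: "l > 0"
  shows "gegenbauer_h n (real l) = Kf l n * (pochhammer (real l) n / fact n * (pi/2))"
proof -
  let ?W = "gegenbauer_weight (real l)" and ?C = "gegenbauer n (real l)"
  have c: "continuous_on {-1..1} (\<lambda>x. ?W x * ?C x ^ 2)"
    using W_cont[of l] l by (intro continuous_intros geg_cont) auto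
  have "gegenbauer_h n (real l) = integral {0..pi} (\<lambda>t. sin t *\<^sub>R (?W (cos t) * ?C (cos t) ^ 2))"
    unfolding gegenbauer_h_def by (rule subst_cos[OF c])
  also have "\<dots> = integral {0..pi} (\<lambda>t. \<Sum>k<l. Kf l n * coef (real l) (real n) k *
        (sin t * sin (real (n + 2*k + 1) * t) * ?C (cos t)))"
  proof (rule integral_cong)
    fix t assume t: "t \<in> {0..pi}"
    have "sin t *\<^sub>R (?W (cos t) * ?C (cos t) ^ 2) = (sin t * (?W (cos t) * ?C (cos t))) * ?C (cos t)"
      by (simp add: power2_eq_square)
    also have "\<dots> = (\<Sum>k<l. Kf l n * coef (real l) (real n) k * (sin t * sin (real (n + 2*k + 1) * t))) * ?C (cos t)"
      unfolding key_pt[OF l t] ..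
    finally show "sin t *\<^sub>R (?W (cos t) * ?C (cos t) ^ 2) = (\<Sum>k<l. Kf l n * coef (real l) (real n) k *
        (sin t * sin (real (n + 2*k + 1) * t) * ?C (cos t)))"
      by (simp add: sum_distrib_right mult.assoc)
  qed
  also have "\<dots> = (\<Sum>k<l. integral {0..pi} (\<lambda>t. Kf l n * coef (real l) (real n) k *
        (sin t * sin (real (n + 2*k + 1) * t) * ?C (cos t))))"
    by (rule integral_sum) (auto intro!: integrable_continuous_interval continuous_intros
          continuous_on_compose2[OF geg_cont[of UNIV]])
  also have "\<dots> = (\<Sum>k<l. Kf l n * coef (real l) (real n) k *
        (if k = 0 then pochhammer (real l) n / fact n * (pi/2) else 0))"
    by (rule sum.cong[OF refl]) (simp only: integral_mult_right geg_sin_int_val)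
  also have "\<dots> = Kf l n * (pochhammer (real l) n / fact n * (pi/2))"
    using l by (simp add: sum.delta' if_distrib cong: if_cong)
  finally show ?thesis .
qed

lemma lhs_int:
  assumes l: "l > 0" and fc: "continuous_on {-1..1} (\<lambda>x. f (complex_of_real x))"
  shows "integral {-1..1} (\<lambda>x. complex_of_real (gegenbauer_weight (real l) x * gegenbauer n (real l) x) * f (complex_of_real x))
    = (\<Sum>k<l. complex_of_real (Kf l n * coef (real l) (real n) k) *
         integral {0..pi} (\<lambda>t. complex_of_real (sin t * sin (real (n + 2*k + 1) * t)) * f (complex_of_real (cos t))))"
proof -
  let ?W = "gegenbauer_weight (real l)" and ?C = "gegenbauer n (real l)"
  have fc2: "continuous_on UNIV (\<lambda>t. f (complex_of_real (cos t)))"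
    by (rule continuous_on_compose2[OF fc]) (auto intro!: continuous_intros)
  have c: "continuous_on {-1..1} (\<lambda>x. complex_of_real (?W x * ?C x) * f (complex_of_real x))"
    using W_cont[of l] l fc by (intro continuous_intros geg_cont) auto
  have "integral {-1..1} (\<lambda>x. complex_of_real (?W x * ?C x) * f (complex_of_real x))
      = integral {0..pi} (\<lambda>t. sin t *\<^sub>R (complex_of_real (?W (cos t) * ?C (cos t)) * f (complex_of_real (cos t))))"
    by (rule subst_cos[OF c])
  also have "\<dots> = integral {0..pi} (\<lambda>t. \<Sum>k<l. complex_of_real (Kf l n * coef (real l) (real n) k) *
         (complex_of_real (sin t * sin (real (n + 2*k + 1) * t)) * f (complex_of_real (cos t))))"
  proof (rule integral_cong)
    fix t assume t: "t \<in> {0..pi}"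
    have "sin t *\<^sub>R (complex_of_real (?W (cos t) * ?C (cos t)) * f (complex_of_real (cos t)))
        = complex_of_real (sin t * (?W (cos t) * ?C (cos t))) * f (complex_of_real (cos t))"
      by (simp add: scaleR_conv_of_real)
    also have "\<dots> = complex_of_real (\<Sum>k<l. Kf l n * coef (real l) (real n) k * (sin t * sin (real (n + 2*k + 1) * t)))
         * f (complex_of_real (cos t))"
      unfolding key_pt[OF l t] ..
    finally show "sin t *\<^sub>R (complex_of_real (?W (cos t) * ?C (cos t)) * f (complex_of_real (cos t)))
       = (\<Sum>k<l. complex_of_real (Kf l n * coef (real l) (real n) k) *
         (complex_of_real (sin t * sin (real (n + 2*k + 1) * t)) * f (complex_of_real (cos t))))"
      by (simp add: sum_distrib_right mult.assoc)
  qed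
  also have "\<dots> = (\<Sum>k<l. integral {0..pi} (\<lambda>t. complex_of_real (Kf l n * coef (real l) (real n) k) *
         (complex_of_real (sin t * sin (real (n + 2*k + 1) * t)) * f (complex_of_real (cos t)))))"
    by (rule integral_sum) (auto intro!: integrable_continuous_interval continuous_intros
          continuous_on_subset[OF fc2])
  also have "\<dots> = (\<Sum>k<l. complex_of_real (Kf l n * coef (real l) (real n) k) *
         integral {0..pi} (\<lambda>t. complex_of_real (sin t * sin (real (n + 2*k + 1) * t)) * f (complex_of_real (cos t))))"
    by (rule sum.cong[OF refl]) (rule integral_mult_right)
  finally show ?thesis .
qed

lemma rhs_int:
  assumes rho: "rho > 1" and T: "open T" "bernstein_region rho \<subseteq> T" "f holomorphic_on T"
  shows "contour_integral (bernstein_ellipse rho) (\<lambda>z. f z / joukowski_inv z ^ m)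
     = 2 * \<i> * integral {0..pi} (\<lambda>t. complex_of_real (sin t * sin (real m * t)) * f (complex_of_real (cos t)))"
proof -
  have fc: "continuous_on T f" using T(3) by (rule holomorphic_on_imp_continuous_on)
  have fc2: "continuous_on UNIV (\<lambda>t. f (complex_of_real (cos t)))"
  proof (rule continuous_on_compose2[OF fc])
    show "continuous_on UNIV (\<lambda>t. complex_of_real (cos t))" by (intro continuous_intros)
    show "(\<lambda>t. complex_of_real (cos t)) ` UNIV \<subseteq> T"
      using real_in_region[OF rho] T(2) by auto
  qed
  show ?thesis
    unfolding contour_to_theta[OF rho T]
    by (rule fold_2pi[OF fc2]) (simp add: cos_diff)
qed

theorem corollary3p3:
  fixes lam :: nat and rho :: real and f :: "complex \<Rightarrow> complex" and n :: nat
  assumes "lam > 0" and "rho > 1"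
    and "f analytic_on bernstein_region rho"
  shows "gegenbauer_coeff n (real lam) f =
    complex_of_real (Gamma (real lam) * Gamma (real n + 1) / Gamma (real n + real lam)) / (\<i> * pi) *
    (\<Sum>k<lam. complex_of_real (pochhammer (real n + 1) k * pochhammer (1 - real lam) k
                 / (pochhammer (real n + real lam + 1) k * fact k)) *
       contour_integral (bernstein_ellipse rho) (\<lambda>z. f z / (joukowski_inv z) ^ (n + 2*k + 1)))"
proof -
  note l = assms(1) and rho = assms(2)
  obtain T where T: "open T" "bernstein_region rho \<subseteq> T" "f holomorphic_on T"
    using assms(3) unfolding analytic_on_holomorphic by blast
  have fc: "continuous_on {-1..1} (\<lambda>x. f (complex_of_real x))"
  proof (rule continuous_on_compose2[OF holomorphic_on_imp_continuous_on[OF T(3)]])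
    show "continuous_on {-1..1} complex_of_real" by (intro continuous_intros)
    show "complex_of_real ` {-1..1} \<subseteq> T" using real_in_region[OF rho] T(2) by auto
  qed
  define I where "I k = integral {0..pi} (\<lambda>t. complex_of_real (sin t * sin (real (n + 2*k + 1) * t)) * f (complex_of_real (cos t)))" for k
  define S where "S = (\<Sum>k<lam. complex_of_real (coef (real lam) (real n) k) * I k)"
  define K where "K = Kf lam n"
  define P where "P = pochhammer (real lam) n / fact n"
  have Kp: "K > 0" unfolding K_def using Kf_pos[OF l] .
  have Pp: "P > 0" unfolding P_def by (intro divide_pos_pos pochhammer_pos) (use l in auto)
  have lhs: "gegenbauer_coeff n (real lam) f = complex_of_real K * S / complex_of_real (K * (P * (pi/2)))"
    unfolding gegenbauer_coeff_def lhs_int[OF l fc] h_val[OF l] S_def I_def K_def P_def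
    by (simp add: sum_distrib_left mult.assoc)
  have G: "Gamma (real lam) * Gamma (real n + 1) / Gamma (real n + real lam) = 1 / P"
  proof -
    have "pochhammer (real lam) n = Gamma (real lam + real n) / Gamma (real lam)"
      by (rule pochhammer_Gamma) (use l in \<open>auto simp: nonpos_Ints_def\<close>)
    moreover have "Gamma (real n + 1) = fact n" using Gamma_fact[of n] by (simp add: add.commute)
    moreover have "Gamma (real lam) > 0" "pochhammer (real lam) n > 0" using l by (auto intro: pochhammer_pos)
    ultimately have g1: "Gamma (real n + real lam) = Gamma (real lam) * pochhammer (real lam) n"
      "Gamma (real n + 1) = fact n" by (simp_all add: field_simps add.commute)
    show ?thesis unfolding P_def g1 using \<open>Gamma (real lam) > 0\<close> \<open>pochhammer (real lam) n > 0\<close>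
      by (simp add: field_simps)
  qed
  have rhs: "(\<Sum>k<lam. complex_of_real (pochhammer (real n + 1) k * pochhammer (1 - real lam) k
                 / (pochhammer (real n + real lam + 1) k * fact k)) *
       contour_integral (bernstein_ellipse rho) (\<lambda>z. f z / (joukowski_inv z) ^ (n + 2*k + 1)))
      = 2 * \<i> * S"
    unfolding S_def sum_distrib_left
    by (rule sum.cong[OF refl]) (unfold rhs_int[OF rho T] I_def coef_def, simp only: mult_ac)
  show ?thesis unfolding lhs rhs G using Kp Pp
    by (simp add: field_simps)
qed

end
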